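(* Let $S$ be a finite semigroup. The following are equivalent: (i) $\mathbb{N}\times S$ has only countably many subdirect products; (ii) $\mathbb{N}\times S$ has only countably many pairwise non-isomorphic subdirect products; (iii) for every $s\in S$ there exists $t\in S$ such that $ts=s$ or $st=s$.
   Context: $\mathbb{N}=\{1,2,3,\dots\}$ is the free monogenic semigroup (positive integers under addition); $\mathbb{N}\times S$ is the direct product with componentwise operation. A subdirect product of $\mathbb{N}\times S$ is a subsemigroup $U\leq \mathbb{N}\times S$ whose projection onto the first coordinate is all of $\mathbb{N}$ and whose projection onto the second coordinate is all of $S$. *)

theory Defs
  imports Main "HOL-Library.Countable_Set"
begin

text \<open>The free monogenic semigroup N = {1,2,3,...} under addition is rendered as the set {1..} of
  natural numbers with +.\<close>

definition semigroup_on :: "'a set \<Rightarrow> ('a \<Rightarrow> 'a \<Rightarrow> 'a) \<Rightarrow> bool" where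
  "semigroup_on S f \<longleftrightarrow> (\<forall>x\<in>S. \<forall>y\<in>S. f x y \<in> S) \<and>
     (\<forall>x\<in>S. \<forall>y\<in>S. \<forall>z\<in>S. f (f x y) z = f x (f y z))"

definition prod_mult :: "('a \<Rightarrow> 'a \<Rightarrow> 'a) \<Rightarrow> nat \<times> 'a \<Rightarrow> nat \<times> 'a \<Rightarrow> nat \<times> 'a" where
  "prod_mult f x y = (fst x + fst y, f (snd x) (snd y))"

definition subdirect_product :: "'a set \<Rightarrow> ('a \<Rightarrow> 'a \<Rightarrow> 'a) \<Rightarrow> (nat \<times> 'a) set \<Rightarrow> bool" where
  "subdirect_product S f U \<longleftrightarrow> U \<subseteq> {1..} \<times> S \<and>
     (\<forall>x\<in>U. \<forall>y\<in>U. prod_mult f x y \<in> U) \<and>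
     fst ` U = {1..} \<and> snd ` U = S"

definition sg_iso :: "('a \<Rightarrow> 'a \<Rightarrow> 'a) \<Rightarrow> (nat \<times> 'a) set \<Rightarrow> (nat \<times> 'a) set \<Rightarrow> bool" where
  "sg_iso f U V \<longleftrightarrow> (\<exists>h. bij_betw h U V \<and>
     (\<forall>x\<in>U. \<forall>y\<in>U. h (prod_mult f x y) = prod_mult f (h x) (h y)))"

end

theory Submission
  imports Defs "HOL-Library.FuncSet"
begin

lemma my_countable_PiE:
  "finite I \<Longrightarrow> (\<And>i. i \<in> I \<Longrightarrow> countable (F i)) \<Longrightarrow> countable (Pi\<^sub>E I F)"
  by (induct I arbitrary: F rule: finite_induct) (auto simp: PiE_insert_eq)

fun spow :: "('a \<Rightarrow> 'a \<Rightarrow> 'a) \<Rightarrow> 'a \<Rightarrow> nat \<Rightarrow> 'a" where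
  "spow f x 0 = x"
| "spow f x (Suc k) = f x (spow f x k)"

lemma sg_closed: "semigroup_on S f \<Longrightarrow> x \<in> S \<Longrightarrow> y \<in> S \<Longrightarrow> f x y \<in> S"
  unfolding semigroup_on_def by blast

lemma sg_assoc: "semigroup_on S f \<Longrightarrow> x \<in> S \<Longrightarrow> y \<in> S \<Longrightarrow> z \<in> S \<Longrightarrow> f (f x y) z = f x (f y z)"
  unfolding semigroup_on_def by blast

lemma spow_in: "semigroup_on S f \<Longrightarrow> x \<in> S \<Longrightarrow> spow f x k \<in> S"
  by (induction k) (auto intro: sg_closed)

lemma spow_add: "semigroup_on S f \<Longrightarrow> x \<in> S \<Longrightarrow> f (spow f x a) (spow f x b) = spow f x (a+b+1)"
proof (induction a)
  case 0 then show ?case by simp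
next
  case (Suc a)
  then show ?case by (simp add: sg_assoc spow_in)
qed

lemma spow_Suc_right: "semigroup_on S f \<Longrightarrow> x \<in> S \<Longrightarrow> spow f x (Suc k) = f (spow f x k) x"
  using spow_add[of S f x k 0] by simp

lemma spow_idem:
  assumes sg: "semigroup_on S f" and fin: "finite S" and x: "x \<in> S"
  shows "\<exists>k. f (spow f x k) (spow f x k) = spow f x k"
proof -
  have "\<not> inj (spow f x)"
  proof
    assume "inj (spow f x)"
    moreover have "range (spow f x) \<subseteq> S" using spow_in[OF sg x] by auto
    ultimately have "finite (UNIV :: nat set)"
      using fin finite_imageD finite_subset by metis
    then show False by simp
  qed
  then obtain i j where ij: "i \<noteq> j" "spow f x i = spow f x j" unfolding inj_def by blast
  then obtain i j where ij: "i < j" "spow f x i = spow f x j"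
    by (metis linorder_neq_iff)
  define p where "p = j - i"
  have p: "p > 0" using ij p_def by simp
  have per: "spow f x (t + p) = spow f x t" if "t \<ge> i" for t
  proof (cases "t = i")
    case True then show ?thesis using ij p_def by simp
  next
    case False
    then have "i < t" using that by simp
    then obtain m where m: "t = i + m + 1" using less_iff_Suc_add by auto
    have "spow f x (t + p) = spow f x (j + m + 1)" using m p_def ij by (simp add: add.commute)
    also have "\<dots> = f (spow f x j) (spow f x m)" using spow_add[OF sg x] by simp
    also have "\<dots> = f (spow f x i) (spow f x m)" using ij by simp
    also have "\<dots> = spow f x t" using spow_add[OF sg x] m by simp
    finally show ?thesis .
  qed
  have perk: "spow f x (t + k * p) = spow f x t" if "t \<ge> i" for t k
  proof (induction k)
    case 0 then show ?case by simp
  next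
    case (Suc k)
    have "spow f x (t + Suc k * p) = spow f x ((t + k * p) + p)" by (simp add: algebra_simps)
    also have "\<dots> = spow f x (t + k * p)" using per that by simp
    finally show ?case using Suc by simp
  qed
  define t where "t = (i+1)*p - 1"
  have "(i+1)*1 \<le> (i+1)*p" using p by (intro mult_le_mono2) simp
  then have "(i+1)*p \<ge> i + 1" by simp
  then have t1: "t \<ge> i" and t2: "t + 1 = (i+1)*p" using t_def by auto
  have "f (spow f x t) (spow f x t) = spow f x (t + t + 1)" using spow_add[OF sg x] by simp
  also have "\<dots> = spow f x (t + (i+1)*p)" using t2 by (simp add: algebra_simps)
  also have "\<dots> = spow f x t" by (rule perk[OF t1])
  finally show ?thesis by blast
qed

lemma sandwich:
  assumes sg: "semigroup_on S f" and a: "a \<in> S" and c: "c \<in> S" and s: "s \<in> S"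
    and h: "s = f (f a s) c"
  shows "s = f (f (spow f a k) s) (spow f c k)"
proof (induction k)
  case 0 then show ?case using h by simp
next
  case (Suc k)
  have A: "spow f a k \<in> S" and C: "spow f c k \<in> S" using spow_in[OF sg a] spow_in[OF sg c] by auto
  have "s = f (f a s) c" by (rule h)
  also have "\<dots> = f (f a (f (f (spow f a k) s) (spow f c k))) c" using Suc by simp
  also have "\<dots> = f (f (f a (spow f a k)) s) (f (spow f c k) c)"
    using A C a c s by (simp add: sg_assoc[OF sg] sg_closed[OF sg])
  also have "\<dots> = f (f (spow f a (Suc k)) s) (spow f c (Suc k))"
    using spow_Suc_right[OF sg c] by simp
  finally show ?case .
qed

lemma no_fix:
  assumes sg: "semigroup_on S f" and fin: "finite S" and a: "a \<in> S" and c: "c \<in> S" and s: "s \<in> S"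
    and h: "s = f (f a s) c"
  shows "\<exists>t\<in>S. f s t = s"
proof -
  obtain k where k: "f (spow f c k) (spow f c k) = spow f c k" using spow_idem[OF sg fin c] by blast
  have A: "spow f a k \<in> S" and C: "spow f c k \<in> S" using spow_in[OF sg a] spow_in[OF sg c] by auto
  have e: "s = f (f (spow f a k) s) (spow f c k)" using sandwich[OF sg a c s h] .
  have "f s (spow f c k) = f (f (f (spow f a k) s) (spow f c k)) (spow f c k)" using e by simp
  also have "\<dots> = f (f (spow f a k) s) (f (spow f c k) (spow f c k))"
    using A C s by (simp add: sg_assoc[OF sg] sg_closed[OF sg])
  also have "\<dots> = s" using k e by simp
  finally show ?thesis using C by blast
qed

section \<open>Countable direction\<close>

definition closedC :: "nat set set" where
  "closedC = {A. \<exists>m>0. \<forall>n\<in>A. n + m \<in> A}"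

definition recon :: "nat \<Rightarrow> nat set \<Rightarrow> nat set" where
  "recon m F = {n. \<exists>a\<in>F. a \<le> n \<and> a mod m = n mod m}"

lemma closedC_sub: "closedC \<subseteq> (\<lambda>(m,F). recon m F) ` (UNIV \<times> Collect finite)"
proof
  fix A assume "A \<in> closedC"
  then obtain m where m: "m > 0" and cl: "\<forall>n\<in>A. n + m \<in> A" unfolding closedC_def by blast
  have clk: "a + k * m \<in> A" if "a \<in> A" for a k
  proof (induction k)
    case 0 then show ?case using that by simp
  next
    case (Suc k)
    then have "(a + k * m) + m \<in> A" using cl by blast
    then show ?case by (simp add: algebra_simps)
  qed
  define L where "L r = (LEAST a. a \<in> A \<and> a mod m = r)" for r
  define F where "F = L ` {r. r < m \<and> (\<exists>a\<in>A. a mod m = r)}"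
  have finF: "finite F" unfolding F_def by auto
  have LI: "L r \<in> A \<and> L r mod m = r" if "\<exists>a\<in>A. a mod m = r" for r
    using that LeastI_ex[of "\<lambda>a. a \<in> A \<and> a mod m = r"] unfolding L_def by blast
  have "A = recon m F"
  proof
    show "A \<subseteq> recon m F"
    proof
      fix n assume n: "n \<in> A"
      define r where "r = n mod m"
      have ex: "\<exists>a\<in>A. a mod m = r" using n r_def by blast
      have rm: "r < m" using m r_def by simp
      have "L r \<in> F" unfolding F_def by (rule imageI) (use ex rm in blast)
      moreover have "L r \<le> n" unfolding L_def by (rule Least_le) (use n r_def in blast)
      moreover have "L r mod m = n mod m" using LI[OF ex] r_def by simp
      ultimately show "n \<in> recon m F" unfolding recon_def by blast
    qed
  next
    show "recon m F \<subseteq> A"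
    proof
      fix n assume "n \<in> recon m F"
      then obtain a where a: "a \<in> F" "a \<le> n" "a mod m = n mod m" unfolding recon_def by blast
      obtain r where "a = L r" "\<exists>a\<in>A. a mod m = r" using a(1) unfolding F_def by blast
      then have aA: "a \<in> A" using LI by blast
      have "n mod m = a mod m" using a(3) by simp
      then have "m dvd n - a" using a(2) by (simp add: mod_eq_dvd_iff_nat)
      then obtain k where "n - a = m * k" by (elim dvdE)
      then have "n = a + k * m" using a(2) by (simp add: algebra_simps)
      then show "n \<in> A" using clk[OF aA] by simp
    qed
  qed
  show "A \<in> (\<lambda>(m,F). recon m F) ` (UNIV \<times> Collect finite)"
  proof (rule image_eqI[where x="(m,F)"])
    show "A = (\<lambda>(m,F). recon m F) (m,F)" using \<open>A = recon m F\<close> by simp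
    show "(m,F) \<in> UNIV \<times> Collect finite" using finF by simp
  qed
qed

lemma countable_closedC: "countable closedC"
proof (rule countable_subset[OF closedC_sub])
  have "countable ((UNIV :: nat set) \<times> Collect (finite :: nat set \<Rightarrow> bool))"
    by (rule countable_SIGMA) (simp_all add: countable_Collect_finite)
  then show "countable ((\<lambda>(m,F). recon m F) ` (UNIV \<times> Collect finite))" by simp
qed

lemma countable_sub:
  assumes sg: "semigroup_on S f" and fin: "finite S"
    and iii: "\<forall>s\<in>S. \<exists>t\<in>S. f t s = s \<or> f s t = s"
  shows "countable {U. subdirect_product S f U}"
proof -
  define X where "X = {U. subdirect_product S f U}"
  define g where "g U = restrict (\<lambda>s. {n. (n,s) \<in> U}) S" for U :: "(nat \<times> 'a) set"
  have gX: "g ` X \<subseteq> Pi\<^sub>E S (\<lambda>_. closedC)"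
  proof
    fix G assume "G \<in> g ` X"
    then obtain U where U: "U \<in> X" and G: "G = g U" by blast
    have sd: "subdirect_product S f U" using U X_def by simp
    have cl: "\<forall>x\<in>U. \<forall>y\<in>U. prod_mult f x y \<in> U" and sub: "U \<subseteq> {1..} \<times> S"
      and sn: "snd ` U = S"
      using sd unfolding subdirect_product_def by auto
    have "{n. (n,s) \<in> U} \<in> closedC" if s: "s \<in> S" for s
    proof -
      obtain t where t: "t \<in> S" "f t s = s \<or> f s t = s" using iii s by blast
      obtain z where z: "z \<in> U" "t = snd z" using t(1) sn by blast
      define m where "m = fst z"
      have mt: "(m,t) \<in> U" using z m_def by simp
      have m1: "m \<ge> 1" using mt sub by auto
      have "\<forall>n\<in>{n. (n,s) \<in> U}. n + m \<in> {n. (n,s) \<in> U}"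
      proof
        fix n assume "n \<in> {n. (n,s) \<in> U}"
        then have ns: "(n,s) \<in> U" by simp
        show "n + m \<in> {n. (n,s) \<in> U}"
        proof (cases "f t s = s")
          case True
          have "prod_mult f (m,t) (n,s) \<in> U" using cl mt ns by blast
          then show ?thesis using True by (simp add: prod_mult_def add.commute)
        next
          case False
          then have "f s t = s" using t by blast
          moreover have "prod_mult f (n,s) (m,t) \<in> U" using cl mt ns by blast
          ultimately show ?thesis by (simp add: prod_mult_def)
        qed
      qed
      then show ?thesis unfolding closedC_def using m1 by (intro CollectI exI[of _ m]) auto
    qed
    then show "G \<in> Pi\<^sub>E S (\<lambda>_. closedC)" using G unfolding g_def by auto
  qed
  have inj: "inj_on g X"
  proof
    fix U V assume U: "U \<in> X" and V: "V \<in> X" and e: "g U = g V"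
    have subU: "U \<subseteq> {1..} \<times> S" and subV: "V \<subseteq> {1..} \<times> S"
      using U V unfolding X_def subdirect_product_def by auto
    have key: "(n,s) \<in> U \<longleftrightarrow> (n,s) \<in> V" if "s \<in> S" for n s
      using fun_cong[OF e, of s] that unfolding g_def by auto
    show "U = V"
    proof
      show "U \<subseteq> V" using key subU by auto
      show "V \<subseteq> U" using key subV by auto
    qed
  qed
  have "countable (Pi\<^sub>E S (\<lambda>_. closedC))"
    by (rule my_countable_PiE[OF fin]) (rule countable_closedC)
  then have "countable (g ` X)" using gX countable_subset by blast
  then have "countable X" using countable_image_inj_on inj by blast
  then show ?thesis using X_def by simp
qed

lemma quot_countable: "countable X \<Longrightarrow> countable (X // R)"
proof -
  assume c: "countable X"
  have sub: "X // R \<subseteq> (\<lambda>x. R `` {x}) ` X" unfolding quotient_def by blast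
  show ?thesis by (rule countable_subset[OF sub countable_image[OF c]])
qed

lemma unc_nat_sets: "\<not> countable (UNIV :: nat set set)"
proof
  assume c: "countable (UNIV :: nat set set)"
  define g where "g = from_nat_into (UNIV :: nat set set)"
  have r: "range g = UNIV" unfolding g_def using c by (intro range_from_nat_into) auto
  define D where "D = {n. n \<notin> g n}"
  have "D \<in> range g" using r by simp
  then obtain k where k: "D = g k" by blast
  have "k \<in> D \<longleftrightarrow> k \<notin> g k" by (simp add: D_def)
  then show False using k by simp
qed

section \<open>Isomorphisms preserve the first coordinate\<close>

fun ppow :: "('a \<Rightarrow> 'a \<Rightarrow> 'a) \<Rightarrow> nat \<times> 'a \<Rightarrow> nat \<Rightarrow> nat \<times> 'a" where
  "ppow f w 0 = w"
| "ppow f w (Suc k) = prod_mult f w (ppow f w k)"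

lemma ppow_eq: "ppow f w k = ((k+1) * fst w, spow f (snd w) k)"
  by (induction k) (auto simp: prod_mult_def)

lemma ppow_in: "\<forall>x\<in>U. \<forall>y\<in>U. prod_mult f x y \<in> U \<Longrightarrow> w \<in> U \<Longrightarrow> ppow f w k \<in> U"
  by (induction k) auto

lemma spow_right_unit:
  assumes sg: "semigroup_on S f" and y: "y \<in> S" and e: "e \<in> S" and ye: "f y e = y"
  shows "f (spow f y k) e = spow f y k"
proof (induction k)
  case 0 then show ?case using ye by simp
next
  case (Suc k)
  have "f (spow f y (Suc k)) e = f y (f (spow f y k) e)"
    using sg_assoc[OF sg y spow_in[OF sg y] e] by simp
  then show ?case using Suc by simp
qed

lemma fst_pres:
  assumes sg: "semigroup_on S f" and fin: "finite S"
    and e: "e \<in> S" and ee: "f e e = e"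
    and gU: "\<And>n. n \<ge> 1 \<Longrightarrow> (n,e) \<in> U"
    and Usub: "U \<subseteq> {1..} \<times> S"
    and Ucl: "\<forall>x\<in>U. \<forall>y\<in>U. prod_mult f x y \<in> U"
    and one: "1 \<in> fst ` V"
    and bij: "bij_betw h U V"
    and hom: "\<forall>x\<in>U. \<forall>y\<in>U. h (prod_mult f x y) = prod_mult f (h x) (h y)"
  shows "\<forall>z\<in>U. fst (h z) = fst z"
proof -
  define \<phi> where "\<phi> z = fst (h z)" for z
  have hphi: "\<phi> (prod_mult f x y) = \<phi> x + \<phi> y" if "x \<in> U" "y \<in> U" for x y
    using hom that unfolding \<phi>_def by (simp add: prod_mult_def)
  define c where "c = \<phi> (1,e)"
  have gS: "\<phi> (Suc m, e) = Suc m * c" for m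
  proof (induction m)
    case 0 then show ?case using c_def by simp
  next
    case (Suc m)
    have "(Suc (Suc m), e) = prod_mult f (Suc m, e) (1, e)" using ee by (simp add: prod_mult_def)
    then have "\<phi> (Suc (Suc m), e) = \<phi> (Suc m, e) + \<phi> (1,e)"
      using hphi gU by simp
    then show ?case using Suc c_def by simp
  qed
  have g: "\<phi> (m, e) = m * c" if "m \<ge> 1" for m
    using gS[of "m - 1"] that by simp
  have pp: "\<phi> (ppow f w k) = (k+1) * \<phi> w" if w: "w \<in> U" for w k
  proof (induction k)
    case 0 then show ?case by simp
  next
    case (Suc k)
    have "\<phi> (ppow f w (Suc k)) = \<phi> w + \<phi> (ppow f w k)"
      using hphi w ppow_in[OF Ucl w] by simp
    then show ?case using Suc by simp
  qed
  have main: "\<phi> z = fst z * c" if z: "z \<in> U" for z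
  proof -
    obtain n x where nx: "z = (n,x)" by (cases z)
    have x: "x \<in> S" and n: "n \<ge> 1" using z nx Usub by auto
    define y where "y = f (f e x) e"
    have yS: "y \<in> S" using y_def sg_closed[OF sg] e x by blast
    have ye: "f y e = y"
      unfolding y_def using sg_assoc[OF sg] sg_closed[OF sg] e x ee by simp
    define w where "w = prod_mult f (prod_mult f (1,e) z) (1,e)"
    have e1: "(1,e) \<in> U" using gU by simp
    have wU: "w \<in> U" unfolding w_def using Ucl e1 z by blast
    have weq: "w = (Suc (Suc n), y)" unfolding w_def y_def nx by (simp add: prod_mult_def)
    have phiw: "\<phi> w = c + \<phi> z + c"
      unfolding w_def using hphi e1 z Ucl c_def by simp
    obtain k where k: "f (spow f y k) (spow f y k) = spow f y k" using spow_idem[OF sg fin yS] by blast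
    have ke: "f (spow f y k) e = spow f y k" using spow_right_unit[OF sg yS e ye] .
    have km: "(k+1) * Suc (Suc n) \<ge> 1" by simp
    have "ppow f w (k+k+1) = prod_mult f (ppow f w k) ((k+1) * Suc (Suc n), e)"
    proof -
      have "spow f y (k+k+1) = spow f y k" using spow_add[OF sg yS, of k k] k by simp
      then show ?thesis unfolding ppow_eq weq using ke by (simp add: prod_mult_def algebra_simps)
    qed
    then have "\<phi> (ppow f w (k+k+1)) = \<phi> (ppow f w k) + \<phi> ((k+1) * Suc (Suc n), e)"
      using hphi ppow_in[OF Ucl wU] gU[OF km] by simp
    moreover have a1: "\<phi> (ppow f w (k+k+1)) = (k+k+1+1) * \<phi> w" by (rule pp[OF wU])
    moreover have a2: "\<phi> (ppow f w k) = (k+1) * \<phi> w" by (rule pp[OF wU])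
    moreover have a3: "\<phi> ((k+1) * Suc (Suc n), e) = (k+1) * Suc (Suc n) * c" by (rule g[OF km])
    ultimately have "(k+k+1+1) * \<phi> w = (k+1) * \<phi> w + (k+1) * Suc (Suc n) * c"
      by (simp only:)
    then have "(k+1) * \<phi> w = (k+1) * (Suc (Suc n) * c)" by (simp add: algebra_simps)
    then have "\<phi> w = Suc (Suc n) * c"
      using mult_left_cancel[of "k+1" "\<phi> w" "Suc (Suc n) * c"] by linarith
    then show ?thesis using phiw nx by simp
  qed
  obtain v where v: "v \<in> V" "fst v = 1" using one by force
  then obtain z where z: "z \<in> U" "v = h z" using bij unfolding bij_betw_def by blast
  then have "fst z * c = 1" using main v unfolding \<phi>_def by simp
  then have "c = 1" by simp
  then show ?thesis using main unfolding \<phi>_def by simp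
qed

section \<open>The uncountable direction\<close>

lemma unc_quot:
  assumes sg: "semigroup_on S f" and fin: "finite S" and s: "s \<in> S"
    and H: "\<forall>t\<in>S. f t s \<noteq> s \<and> f s t \<noteq> s"
  shows "\<not> countable ({U. subdirect_product S f U} // {(U, V). sg_iso f U V})"
proof
  assume cq: "countable ({U. subdirect_product S f U} // {(U, V). sg_iso f U V})"
  note cl = sg_closed[OF sg] and as = sg_assoc[OF sg]
  have nf: False if "a \<in> S" "c \<in> S" "s = f (f a s) c" for a c
    using no_fix[OF sg fin that(1,2) s that(3)] H by blast
  define P where "P = {u\<in>S. s = u \<or> (\<exists>a\<in>S. s = f a u) \<or> (\<exists>b\<in>S. s = f u b)
                          \<or> (\<exists>a\<in>S. \<exists>b\<in>S. s = f (f a u) b)}"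
  define Q where "Q = S - P"
  have QS: "Q \<subseteq> S" and sQ: "s \<notin> Q" using s unfolding Q_def P_def by auto
  have down1: "u \<in> P" if u: "u \<in> S" and v: "v \<in> S" and uv: "f u v \<in> P" for u v
  proof -
    have "s = f u v \<or> (\<exists>a\<in>S. s = f a (f u v)) \<or> (\<exists>b\<in>S. s = f (f u v) b)
                          \<or> (\<exists>a\<in>S. \<exists>b\<in>S. s = f (f a (f u v)) b)" using uv unfolding P_def by blast
    then have "(\<exists>b\<in>S. s = f u b) \<or> (\<exists>a\<in>S. \<exists>b\<in>S. s = f (f a u) b)"
    proof (elim disjE bexE)
      assume "s = f u v" then show ?thesis using v by blast
    next
      fix a assume a: "a \<in> S" "s = f a (f u v)"
      then have "s = f (f a u) v" using u v by (simp add: as)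
      then show ?thesis using a(1) v by blast
    next
      fix b assume b: "b \<in> S" "s = f (f u v) b"
      then have "s = f u (f v b)" using u v by (simp add: as)
      then show ?thesis using cl[OF v b(1)] by blast
    next
      fix a b assume "a \<in> S" "b \<in> S" "s = f (f a (f u v)) b"
      then have "s = f (f a u) (f v b)" using u v by (simp add: as cl)
      then show ?thesis using \<open>a \<in> S\<close> \<open>b \<in> S\<close> v cl by blast
    qed
    then show ?thesis using u unfolding P_def by blast
  qed
  have down2: "u \<in> P" if u: "u \<in> S" and v: "v \<in> S" and uv: "f v u \<in> P" for u v
  proof -
    have "s = f v u \<or> (\<exists>a\<in>S. s = f a (f v u)) \<or> (\<exists>b\<in>S. s = f (f v u) b)
                          \<or> (\<exists>a\<in>S. \<exists>b\<in>S. s = f (f a (f v u)) b)" using uv unfolding P_def by blast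
    then have "(\<exists>a\<in>S. s = f a u) \<or> (\<exists>a\<in>S. \<exists>b\<in>S. s = f (f a u) b)"
    proof (elim disjE bexE)
      assume "s = f v u" then show ?thesis using v by blast
    next
      fix a assume "a \<in> S" "s = f a (f v u)"
      then have "s = f (f a v) u" using u v by (simp add: as)
      then show ?thesis using \<open>a \<in> S\<close> v cl by blast
    next
      fix b assume "b \<in> S" "s = f (f v u) b"
      then show ?thesis using v by blast
    next
      fix a b assume "a \<in> S" "b \<in> S" "s = f (f a (f v u)) b"
      then have "s = f (f (f a v) u) b" using u v by (simp add: as)
      then show ?thesis using \<open>a \<in> S\<close> \<open>b \<in> S\<close> v cl by blast
    qed
    then show ?thesis using u unfolding P_def by blast
  qed
  have idl1: "f u v \<in> Q" if "u \<in> Q" "v \<in> S" for u v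
    using that down1 cl unfolding Q_def by blast
  have idl2: "f v u \<in> Q" if "u \<in> Q" "v \<in> S" for u v
    using that down2 cl unfolding Q_def by blast
  have sy: "f s y \<in> Q" if y: "y \<in> S" for y
  proof -
    have "f s y \<notin> P"
    proof
      assume "f s y \<in> P"
      then have "s = f s y \<or> (\<exists>a\<in>S. s = f a (f s y)) \<or> (\<exists>b\<in>S. s = f (f s y) b)
                          \<or> (\<exists>a\<in>S. \<exists>b\<in>S. s = f (f a (f s y)) b)" unfolding P_def by blast
      then show False
      proof (elim disjE bexE)
        assume "s = f s y" then show False using H y by auto
      next
        fix a assume a: "a \<in> S" "s = f a (f s y)"
        then have "s = f (f a s) y" using s y by (simp add: as)
        then show False using nf a(1) y by blast
      next
        fix b assume b: "b \<in> S" "s = f (f s y) b"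
        then have "s = f s (f y b)" using s y by (simp add: as)
        moreover have "f s (f y b) \<noteq> s" using H cl[OF y b(1)] by blast
        ultimately show False by simp
      next
        fix a b assume ab: "a \<in> S" "b \<in> S" "s = f (f a (f s y)) b"
        then have "s = f (f a s) (f y b)" using s y by (simp add: as cl)
        then show False using nf ab(1,2) y cl by blast
      qed
    qed
    then show ?thesis unfolding Q_def using cl s y by blast
  qed
  have ys: "f y s \<in> Q" if y: "y \<in> S" for y
  proof -
    have "f y s \<notin> P"
    proof
      assume "f y s \<in> P"
      then have "s = f y s \<or> (\<exists>a\<in>S. s = f a (f y s)) \<or> (\<exists>b\<in>S. s = f (f y s) b)
                          \<or> (\<exists>a\<in>S. \<exists>b\<in>S. s = f (f a (f y s)) b)" unfolding P_def by blast
      then show False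
      proof (elim disjE bexE)
        assume "s = f y s" then show False using H y by auto
      next
        fix a assume a: "a \<in> S" "s = f a (f y s)"
        then have "s = f (f a y) s" using s y by (simp add: as)
        moreover have "f (f a y) s \<noteq> s" using H cl[OF a(1) y] by blast
        ultimately show False by simp
      next
        fix b assume b: "b \<in> S" "s = f (f y s) b"
        then show False using nf y by blast
      next
        fix a b assume ab: "a \<in> S" "b \<in> S" "s = f (f a (f y s)) b"
        then have "s = f (f (f a y) s) b" using s y by (simp add: as cl)
        then show False using nf ab(1,2) y cl by blast
      qed
    qed
    then show ?thesis unfolding Q_def using cl s y by blast
  qed
  have q0: "f s s \<in> Q" using sy s by blast
  obtain k where k: "f (spow f (f s s) k) (spow f (f s s) k) = spow f (f s s) k"
    using spow_idem[OF sg fin cl[OF s s]] by blast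
  define e where "e = spow f (f s s) k"
  have spQ: "spow f (f s s) j \<in> Q" for j
  proof (induction j)
    case 0 then show ?case using q0 by simp
  next
    case (Suc j) then show ?case using idl2 q0 QS by auto
  qed
  have eQ: "e \<in> Q" and ee: "f e e = e" using spQ k e_def by auto
  have eS: "e \<in> S" using eQ QS by blast
  define E where "E = {n::nat. n \<ge> 2 \<and> even n}"
  define od where "od B = (\<lambda>b::nat. 2*b+1) ` B" for B
  define UU where "UU B = ({1..} \<times> Q) \<union> (E \<times> S) \<union> (od B \<times> {s})" for B
  have memodd: "(2*a+1, y) \<in> UU B \<longleftrightarrow> (y \<in> Q \<or> (y = s \<and> a \<in> B))" for a y B
  proof -
    have "2*a+1 \<notin> E" unfolding E_def by simp
    moreover have "2*a+1 \<in> od B \<longleftrightarrow> a \<in> B" unfolding od_def by auto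
    ultimately show ?thesis unfolding UU_def by auto
  qed
  have odd_od: "n \<in> od B \<Longrightarrow> odd n" for n B unfolding od_def by auto
  have sub: "UU B \<subseteq> {1..} \<times> S" for B
    using QS s unfolding UU_def E_def od_def by auto
  have gU: "(n, e) \<in> UU B" if "n \<ge> 1" for n B
    using that eQ unfolding UU_def by auto
  have clU: "\<forall>x\<in>UU B. \<forall>y\<in>UU B. prod_mult f x y \<in> UU B" for B
  proof (intro ballI)
    fix x y assume x: "x \<in> UU B" and y: "y \<in> UU B"
    obtain n u where nu: "x = (n,u)" by (cases x)
    obtain m v where mv: "y = (m,v)" by (cases y)
    have u: "u \<in> S" "n \<ge> 1" using sub x nu by auto
    have v: "v \<in> S" "m \<ge> 1" using sub y mv by auto
    have pm: "prod_mult f x y = (n+m, f u v)" using nu mv by (simp add: prod_mult_def)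
    have fQ: "f u v \<in> Q \<Longrightarrow> prod_mult f x y \<in> UU B" using pm u v unfolding UU_def by auto
    show "prod_mult f x y \<in> UU B"
    proof (cases "u \<in> Q \<or> v \<in> Q")
      case True
      then have "f u v \<in> Q" using idl1 idl2 u v by blast
      then show ?thesis using fQ by blast
    next
      case False
      then have xu: "(n \<in> E) \<or> (n \<in> od B \<and> u = s)" using x nu unfolding UU_def by auto
      have yv: "(m \<in> E) \<or> (m \<in> od B \<and> v = s)" using y mv False unfolding UU_def by auto
      show ?thesis
      proof (cases "u = s \<or> v = s")
        case True
        then have "f u v \<in> Q" using sy ys u v by blast
        then show ?thesis using fQ by blast
      next
        case False
        then have "n \<in> E" "m \<in> E" using xu yv by auto
        then have "n + m \<in> E" unfolding E_def by auto
        then show ?thesis using pm cl u v unfolding UU_def by auto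
      qed
    qed
  qed
  have sdp: "subdirect_product S f (UU B)" for B
  proof -
    have "fst ` UU B = {1..}"
    proof
      show "fst ` UU B \<subseteq> {1..}" using sub by force
      show "{1..} \<subseteq> fst ` UU B"
      proof
        fix n :: nat assume "n \<in> {1..}"
        then have "(n, e) \<in> UU B" using gU by simp
        then show "n \<in> fst ` UU B" by force
      qed
    qed
    moreover have "snd ` UU B = S"
    proof
      show "snd ` UU B \<subseteq> S" using sub by force
      show "S \<subseteq> snd ` UU B"
      proof
        fix y assume "y \<in> S"
        then have "(2, y) \<in> UU B" unfolding UU_def E_def by auto
        then show "y \<in> snd ` UU B" by force
      qed
    qed
    ultimately show ?thesis unfolding subdirect_product_def using sub clU by blast
  qed
  have fibcard: "card {z \<in> UU B. fst z = 2*a+1} = card Q + (if a \<in> B then 1 else 0)" for a B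
  proof -
    have "{z \<in> UU B. fst z = 2*a+1} = Pair (2*a+1) ` (Q \<union> (if a \<in> B then {s} else {}))"
    proof
      show "{z \<in> UU B. fst z = 2*a+1} \<subseteq> Pair (2*a+1) ` (Q \<union> (if a \<in> B then {s} else {}))"
      proof
        fix z assume z: "z \<in> {z \<in> UU B. fst z = 2*a+1}"
        obtain n y where ny: "z = (n,y)" by (cases z)
        then have "n = 2*a+1" "(2*a+1, y) \<in> UU B" using z by auto
        then show "z \<in> Pair (2*a+1) ` (Q \<union> (if a \<in> B then {s} else {}))"
          using memodd ny by auto
      qed
      show "Pair (2*a+1) ` (Q \<union> (if a \<in> B then {s} else {})) \<subseteq> {z \<in> UU B. fst z = 2*a+1}"
        using memodd by (auto split: if_splits)
    qed
    moreover have "card (Pair (2*a+1) ` (Q \<union> (if a \<in> B then {s} else {})))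
        = card (Q \<union> (if a \<in> B then {s} else {}))"
      by (rule card_image) (simp add: inj_on_def)
    moreover have "finite Q" using QS fin finite_subset by blast
    ultimately show ?thesis using sQ by auto
  qed
  have iso_eq: "B1 = B2" if iso: "sg_iso f (UU B1) (UU B2)" for B1 B2
  proof -
    obtain h where bij: "bij_betw h (UU B1) (UU B2)"
      and hom: "\<forall>x\<in>UU B1. \<forall>y\<in>UU B1. h (prod_mult f x y) = prod_mult f (h x) (h y)"
      using iso unfolding sg_iso_def by blast
    have one: "1 \<in> fst ` UU B2" using sdp[of B2] unfolding subdirect_product_def by auto
    have fp: "\<forall>z\<in>UU B1. fst (h z) = fst z"
      by (rule fst_pres[OF sg fin eS ee gU sub clU one bij hom])
    have "a \<in> B1 \<longleftrightarrow> a \<in> B2" for a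
    proof -
      define F1 where "F1 = {z \<in> UU B1. fst z = 2*a+1}"
      define F2 where "F2 = {z \<in> UU B2. fst z = 2*a+1}"
      have hU: "h z \<in> UU B2" if "z \<in> UU B1" for z
        using bij that unfolding bij_betw_def by blast
      have hF: "h ` F1 = F2"
      proof
        show "h ` F1 \<subseteq> F2"
        proof
          fix v assume "v \<in> h ` F1"
          then obtain z where z: "z \<in> F1" "v = h z" by blast
          have "z \<in> UU B1" "fst z = 2*a+1" using z(1) unfolding F1_def by auto
          then show "v \<in> F2" using z(2) hU fp unfolding F2_def by simp
        qed
        show "F2 \<subseteq> h ` F1"
        proof
          fix v assume v: "v \<in> F2"
          have "h ` UU B1 = UU B2" using bij unfolding bij_betw_def by blast
          moreover have "v \<in> UU B2" using v unfolding F2_def by blast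
          ultimately have "v \<in> h ` UU B1" by simp
          then obtain z where z: "z \<in> UU B1" "v = h z" by blast
          have "fst v = 2*a+1" using v unfolding F2_def by blast
          then have "fst z = 2*a+1" using fp z by simp
          then have "z \<in> F1" using z(1) unfolding F1_def by blast
          then show "v \<in> h ` F1" using z(2) by blast
        qed
      qed
      have "F1 \<subseteq> UU B1" unfolding F1_def by blast
      then have "bij_betw h F1 F2" using bij_betw_subset[OF bij _ hF] by blast
      then have "card F1 = card F2" by (rule bij_betw_same_card)
      then have "card Q + (if a \<in> B1 then 1 else 0) = card Q + (if a \<in> B2 then 1 else 0)"
        using fibcard[of B1 a] fibcard[of B2 a] unfolding F1_def F2_def by simp
      then show ?thesis by (cases "a \<in> B1"; cases "a \<in> B2") simp_all
    qed
    then show ?thesis by blast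
  qed
  define X where "X = {U. subdirect_product S f U}"
  define R where "R = {(U, V). sg_iso f U V}"
  define G where "G B = R `` {UU B}" for B
  have refl: "sg_iso f U U" for U unfolding sg_iso_def by (rule exI[of _ id]) simp
  have injG: "inj G"
  proof
    fix B1 B2 assume "G B1 = G B2"
    moreover have "UU B2 \<in> G B2" unfolding G_def R_def using refl by simp
    ultimately have "UU B2 \<in> G B1" by simp
    then have "sg_iso f (UU B1) (UU B2)" unfolding G_def R_def by simp
    then show "B1 = B2" by (rule iso_eq)
  qed
  have rG: "range G \<subseteq> X // R"
  proof
    fix Y assume "Y \<in> range G"
    then obtain B where "Y = G B" by blast
    moreover have "UU B \<in> X" unfolding X_def using sdp by simp
    ultimately show "Y \<in> X // R" unfolding G_def by (simp add: quotientI)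
  qed
  have "countable (X // R)" using cq unfolding X_def R_def .
  then have "countable (range G)" using rG by (rule countable_subset[rotated])
  then have "countable (UNIV :: nat set set)" using injG by (rule countable_image_inj_on)
  then show False using unc_nat_sets by blast
qed

theorem theoremE:
  fixes S :: "'a set" and f :: "'a \<Rightarrow> 'a \<Rightarrow> 'a"
  assumes "semigroup_on S f" and "finite S"
  shows "(countable {U. subdirect_product S f U}
          \<longleftrightarrow> countable ({U. subdirect_product S f U} // {(U, V). sg_iso f U V}))
       \<and> (countable {U. subdirect_product S f U}
          \<longleftrightarrow> (\<forall>s\<in>S. \<exists>t\<in>S. f t s = s \<or> f s t = s))"
proof -
  let ?X = "{U. subdirect_product S f U}"
  let ?Q = "?X // {(U, V). sg_iso f U V}"
  have a: "countable ?X \<Longrightarrow> countable ?Q" by (rule quot_countable)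
  have b: "(\<forall>s\<in>S. \<exists>t\<in>S. f t s = s \<or> f s t = s) \<Longrightarrow> countable ?X"
    by (rule countable_sub[OF assms])
  have c: "countable ?Q \<Longrightarrow> (\<forall>s\<in>S. \<exists>t\<in>S. f t s = s \<or> f s t = s)"
  proof (rule ccontr)
    assume cq: "countable ?Q" and n: "\<not> (\<forall>s\<in>S. \<exists>t\<in>S. f t s = s \<or> f s t = s)"
    then obtain s where s: "s \<in> S" and H: "\<forall>t\<in>S. f t s \<noteq> s \<and> f s t \<noteq> s" by blast
    show False using unc_quot[OF assms s H] cq by blast
  qed
  show ?thesis using a b c by blast
qed

end
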